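(* If a formula $A$ is valid in every neighbourhood model satisfying centering (that is, in all models of $\mathbb{PC}$), then the sequent $\Rightarrow x:A$ is derivable in $\mathsf{CL}^C$.
   Context: Formulas $\mathcal{L}::=p\mid\bot\mid A\wedge B\mid A\lor B\mid A\to B\mid A>B$. Neighbourhood model $\langle W,N,\llbracket\cdot\rrbracket\rangle$: $W\ne\emptyset$, $N:W\to\mathcal{P}(\mathcal{P}(W))$ with all $\alpha\in N(x)$ non-empty; $x\Vdash A>B$ iff every $\alpha\in N(x)$ containing an $A$-world has some $\beta\in N(x)$, $\beta\subseteq\alpha$, containing an $A$-world, with all worlds of $\beta$ forcing $A\to B$. Centering: for all $x\in W$, $x\in\alpha$ for every $\alpha\in N(x)$, and $\{x\}\in N(x)$. $\mathsf{CL}^C$: world labels, neighbourhood labels including $\{x\}$ for each world label $x$; relational atoms $a\in N(x)$, $x\in a$, $a\subseteq b$; labelled formulas: these, $x:A$, $a\Vdash^\exists A$, $a\Vdash^\forall A$, $x\Vdash_aA|B$. Rules (premisses / conclusion; "fresh": not in conclusion): initial $x:p,\Gamma\Rightarrow\Delta,x:p$ ($p$ atomic), $x:\bot,\Gamma\Rightarrow\Delta$; G3 propositional rules; L$\forall$: $x:A,x\in a,a\Vdash^\forall A,\Gamma\Rightarrow\Delta$ / $x\in a,a\Vdash^\forall A,\Gamma\Rightarrow\Delta$; R$\forall$ (x fresh): $x\in a,\Gamma\Rightarrow\Delta,x:A$ / $\Gamma\Rightarrow\Delta,a\Vdash^\forall A$; L$\exists$ (x fresh): $x\in a,x:A,\Gamma\Rightarrow\Delta$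 / $a\Vdash^\exists A,\Gamma\Rightarrow\Delta$; R$\exists$: $x\in a,\Gamma\Rightarrow\Delta,x:A,a\Vdash^\exists A$ / $x\in a,\Gamma\Rightarrow\Delta,a\Vdash^\exists A$; R$>$ (a fresh): $a\in N(x),a\Vdash^\exists A,\Gamma\Rightarrow\Delta,x\Vdash_aA|B$ / $\Gamma\Rightarrow\Delta,x:A>B$; L$>$: $a\in N(x),x:A>B,\Gamma\Rightarrow\Delta,a\Vdash^\exists A$ and $x\Vdash_aA|B,a\in N(x),x:A>B,\Gamma\Rightarrow\Delta$ / $a\in N(x),x:A>B,\Gamma\Rightarrow\Delta$; R$|$: $c\in N(x),c\subseteq a,\Gamma\Rightarrow\Delta,x\Vdash_aA|B,c\Vdash^\exists A$ and $c\in N(x),c\subseteq a,\Gamma\Rightarrow\Delta,x\Vdash_aA|B,c\Vdash^\forall A\to B$ / $c\in N(x),c\subseteq a,\Gamma\Rightarrow\Delta,x\Vdash_aA|B$; L$|$ (c fresh): $c\in N(x),c\subseteq a,c\Vdash^\exists A,c\Vdash^\forall A\to B,\Gamma\Rightarrow\Delta$ / $x\Vdash_aA|B,\Gamma\Rightarrow\Delta$; Ref: $a\subseteq a,\Gamma\Rightarrow\Delta$ / $\Gamma\Rightarrow\Delta$; Tr: $c\subseteq a,c\subseteq b,b\subseteq a,\Gamma\Rightarrow\Delta$ / $c\subseteq b,b\subseteq a,\Gamma\Rightarrow\Delta$; L$\subseteq$: $x\in a,a\subseteq b,x\in b,\Gamma\Rightarrow\Delta$ / $x\in a,a\subseteq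 b,\Gamma\Rightarrow\Delta$; N (a fresh): $a\in N(x),\Gamma\Rightarrow\Delta$ / $\Gamma\Rightarrow\Delta$; 0 (y fresh): $y\in a,a\in N(x),\Gamma\Rightarrow\Delta$ / $a\in N(x),\Gamma\Rightarrow\Delta$; T (a fresh): $x\in a,a\in N(x),\Gamma\Rightarrow\Delta$ / $\Gamma\Rightarrow\Delta$; W: $x\in a,a\in N(x),\Gamma\Rightarrow\Delta$ / $a\in N(x),\Gamma\Rightarrow\Delta$; Single: $x\in\{x\},\{x\}\in N(x),\Gamma\Rightarrow\Delta$ / $\{x\}\in N(x),\Gamma\Rightarrow\Delta$; C: $\{x\}\in N(x),\{x\}\subseteq a,a\in N(x),\Gamma\Rightarrow\Delta$ / $a\in N(x),\Gamma\Rightarrow\Delta$; Repl$_1$: $y\in\{x\},At(x),At(y),\Gamma\Rightarrow\Delta$ / $y\in\{x\},At(x),\Gamma\Rightarrow\Delta$; Repl$_2$: $y\in\{x\},At(x),At(y),\Gamma\Rightarrow\Delta$ / $y\in\{x\},At(y),\Gamma\Rightarrow\Delta$, where $At(x)$ is one of $x:P$ ($P$ atomic), $x\in a$, $a\in N(x)$, $x\in\{z\}$ and $At(y)$ replaces $x$ by $y$. *)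

theory Defs
  imports Main "HOL-Library.Multiset"
begin

datatype fm = Atom nat | Bot | And fm fm | Or fm fm | Imp fm fm | Cond fm fm

record 'w nmodel =
  W  :: "'w set"
  Nb :: "'w \<Rightarrow> 'w set set"
  V  :: "nat \<Rightarrow> 'w set"

definition nmodel :: "'w nmodel \<Rightarrow> bool" where
  "nmodel M \<longleftrightarrow> W M \<noteq> {} \<and> (\<forall>x\<in>W M. \<forall>\<alpha>\<in>Nb M x. \<alpha> \<noteq> {} \<and> \<alpha> \<subseteq> W M)"

definition centering :: "'w nmodel \<Rightarrow> bool" where
  "centering M \<longleftrightarrow> (\<forall>x\<in>W M. (\<forall>\<alpha>\<in>Nb M x. x \<in> \<alpha>) \<and> {x} \<in> Nb M x)"

fun forces :: "'w nmodel \<Rightarrow> 'w \<Rightarrow> fm \<Rightarrow> bool" where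
  "forces M x (Atom p) = (x \<in> V M p)"
| "forces M x Bot = False"
| "forces M x (And A B) = (forces M x A \<and> forces M x B)"
| "forces M x (Or A B) = (forces M x A \<or> forces M x B)"
| "forces M x (Imp A B) = (forces M x A \<longrightarrow> forces M x B)"
| "forces M x (Cond A B) =
     (\<forall>\<alpha>\<in>Nb M x. (\<exists>y\<in>\<alpha>. forces M y A) \<longrightarrow>
        (\<exists>\<beta>\<in>Nb M x. \<beta> \<subseteq> \<alpha> \<and> (\<exists>y\<in>\<beta>. forces M y A) \<and>
                     (\<forall>y\<in>\<beta>. forces M y A \<longrightarrow> forces M y B)))"

definition valid_in :: "'w nmodel \<Rightarrow> fm \<Rightarrow> bool" where
  "valid_in M A \<longleftrightarrow> (\<forall>x\<in>W M. forces M x A)"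

text \<open>World labels are natural numbers; neighbourhood labels are either variables
  NV n or singleton labels Sg x (standing for {x}).\<close>

datatype nl = NV nat | Sg nat

datatype lf =
    InN nl nat              (* a \<in> N(x) *)
  | InW nat nl              (* x \<in> a *)
  | Sub nl nl
  | Lab nat fm
  | ExF nl fm               (* a \<Vdash>\<exists> A *)
  | AllF nl fm              (* a \<Vdash>\<forall> A *)
  | Cnd nat nl fm fm        (* x \<Vdash>_a A | B *)

fun wl_nl :: "nl \<Rightarrow> nat set" where
  "wl_nl (NV n) = {}" | "wl_nl (Sg x) = {x}"

fun nv_nl :: "nl \<Rightarrow> nat set" where
  "nv_nl (NV n) = {n}" | "nv_nl (Sg x) = {}"

fun wl_lf :: "lf \<Rightarrow> nat set" where
  "wl_lf (InN a x) = wl_nl a \<union> {x}"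
| "wl_lf (InW x a) = {x} \<union> wl_nl a"
| "wl_lf (Sub a b) = wl_nl a \<union> wl_nl b"
| "wl_lf (Lab x A) = {x}"
| "wl_lf (ExF a A) = wl_nl a"
| "wl_lf (AllF a A) = wl_nl a"
| "wl_lf (Cnd x a A B) = {x} \<union> wl_nl a"

fun nv_lf :: "lf \<Rightarrow> nat set" where
  "nv_lf (InN a x) = nv_nl a"
| "nv_lf (InW x a) = nv_nl a"
| "nv_lf (Sub a b) = nv_nl a \<union> nv_nl b"
| "nv_lf (Lab x A) = {}"
| "nv_lf (ExF a A) = nv_nl a"
| "nv_lf (AllF a A) = nv_nl a"
| "nv_lf (Cnd x a A B) = nv_nl a"

definition wls :: "lf multiset \<Rightarrow> lf multiset \<Rightarrow> nat set" where
  "wls \<Gamma> \<Delta> = (\<Union>f\<in>set_mset \<Gamma> \<union> set_mset \<Delta>. wl_lf f)"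

definition nvs :: "lf multiset \<Rightarrow> lf multiset \<Rightarrow> nat set" where
  "nvs \<Gamma> \<Delta> = (\<Union>f\<in>set_mset \<Gamma> \<union> set_mset \<Delta>. nv_lf f)"

text \<open>Atomic formulas At(x) usable in the replacement rules: x:P, x \<in> a, a \<in> N(x), x \<in> {z}.\<close>

datatype atk = AtP nat | AtIn nl | AtN nl | AtSg nat

fun at :: "atk \<Rightarrow> nat \<Rightarrow> lf" where
  "at (AtP p) w = Lab w (Atom p)"
| "at (AtIn a) w = InW w a"
| "at (AtN a) w = InN a w"
| "at (AtSg z) w = InW w (Sg z)"

inductive deriv :: "lf multiset \<Rightarrow> lf multiset \<Rightarrow> bool" where
  init: "deriv (add_mset (Lab x (Atom p)) \<Gamma>) (add_mset (Lab x (Atom p)) \<Delta>)"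
| LBot: "deriv (add_mset (Lab x Bot) \<Gamma>) \<Delta>"
| LAnd: "deriv (add_mset (Lab x A) (add_mset (Lab x B) \<Gamma>)) \<Delta> \<Longrightarrow>
         deriv (add_mset (Lab x (And A B)) \<Gamma>) \<Delta>"
| RAnd: "deriv \<Gamma> (add_mset (Lab x A) \<Delta>) \<Longrightarrow> deriv \<Gamma> (add_mset (Lab x B) \<Delta>) \<Longrightarrow>
         deriv \<Gamma> (add_mset (Lab x (And A B)) \<Delta>)"
| LOr: "deriv (add_mset (Lab x A) \<Gamma>) \<Delta> \<Longrightarrow> deriv (add_mset (Lab x B) \<Gamma>) \<Delta> \<Longrightarrow>
        deriv (add_mset (Lab x (Or A B)) \<Gamma>) \<Delta>"
| ROr: "deriv \<Gamma> (add_mset (Lab x A) (add_mset (Lab x B) \<Delta>)) \<Longrightarrow>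
        deriv \<Gamma> (add_mset (Lab x (Or A B)) \<Delta>)"
| LImp: "deriv \<Gamma> (add_mset (Lab x A) \<Delta>) \<Longrightarrow> deriv (add_mset (Lab x B) \<Gamma>) \<Delta> \<Longrightarrow>
         deriv (add_mset (Lab x (Imp A B)) \<Gamma>) \<Delta>"
| RImp: "deriv (add_mset (Lab x A) \<Gamma>) (add_mset (Lab x B) \<Delta>) \<Longrightarrow>
         deriv \<Gamma> (add_mset (Lab x (Imp A B)) \<Delta>)"
| LAll: "deriv (add_mset (Lab x A) (add_mset (InW x a) (add_mset (AllF a A) \<Gamma>))) \<Delta> \<Longrightarrow>
         deriv (add_mset (InW x a) (add_mset (AllF a A) \<Gamma>)) \<Delta>"
| RAll: "deriv (add_mset (InW x a) \<Gamma>) (add_mset (Lab x A) \<Delta>) \<Longrightarrow>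
         x \<notin> wls \<Gamma> (add_mset (AllF a A) \<Delta>) \<Longrightarrow>
         deriv \<Gamma> (add_mset (AllF a A) \<Delta>)"
| LEx: "deriv (add_mset (InW x a) (add_mset (Lab x A) \<Gamma>)) \<Delta> \<Longrightarrow>
        x \<notin> wls (add_mset (ExF a A) \<Gamma>) \<Delta> \<Longrightarrow>
        deriv (add_mset (ExF a A) \<Gamma>) \<Delta>"
| REx: "deriv (add_mset (InW x a) \<Gamma>) (add_mset (Lab x A) (add_mset (ExF a A) \<Delta>)) \<Longrightarrow>
        deriv (add_mset (InW x a) \<Gamma>) (add_mset (ExF a A) \<Delta>)"
| RCond: "deriv (add_mset (InN (NV n) x) (add_mset (ExF (NV n) A) \<Gamma>))
                (add_mset (Cnd x (NV n) A B) \<Delta>) \<Longrightarrow>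
          n \<notin> nvs \<Gamma> (add_mset (Lab x (Cond A B)) \<Delta>) \<Longrightarrow>
          deriv \<Gamma> (add_mset (Lab x (Cond A B)) \<Delta>)"
| LCond: "deriv (add_mset (InN a x) (add_mset (Lab x (Cond A B)) \<Gamma>)) (add_mset (ExF a A) \<Delta>) \<Longrightarrow>
          deriv (add_mset (Cnd x a A B) (add_mset (InN a x) (add_mset (Lab x (Cond A B)) \<Gamma>))) \<Delta> \<Longrightarrow>
          deriv (add_mset (InN a x) (add_mset (Lab x (Cond A B)) \<Gamma>)) \<Delta>"
| RBar: "deriv (add_mset (InN c x) (add_mset (Sub c a) \<Gamma>))
               (add_mset (Cnd x a A B) (add_mset (ExF c A) \<Delta>)) \<Longrightarrow>
         deriv (add_mset (InN c x) (add_mset (Sub c a) \<Gamma>))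
               (add_mset (Cnd x a A B) (add_mset (AllF c (Imp A B)) \<Delta>)) \<Longrightarrow>
         deriv (add_mset (InN c x) (add_mset (Sub c a) \<Gamma>)) (add_mset (Cnd x a A B) \<Delta>)"
| LBar: "deriv (add_mset (InN (NV n) x) (add_mset (Sub (NV n) a)
                 (add_mset (ExF (NV n) A) (add_mset (AllF (NV n) (Imp A B)) \<Gamma>)))) \<Delta> \<Longrightarrow>
         n \<notin> nvs (add_mset (Cnd x a A B) \<Gamma>) \<Delta> \<Longrightarrow>
         deriv (add_mset (Cnd x a A B) \<Gamma>) \<Delta>"
| Ref: "deriv (add_mset (Sub a a) \<Gamma>) \<Delta> \<Longrightarrow> deriv \<Gamma> \<Delta>"
| Tr: "deriv (add_mset (Sub c a) (add_mset (Sub c b) (add_mset (Sub b a) \<Gamma>))) \<Delta> \<Longrightarrow>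
       deriv (add_mset (Sub c b) (add_mset (Sub b a) \<Gamma>)) \<Delta>"
| LSub: "deriv (add_mset (InW x a) (add_mset (Sub a b) (add_mset (InW x b) \<Gamma>))) \<Delta> \<Longrightarrow>
         deriv (add_mset (InW x a) (add_mset (Sub a b) \<Gamma>)) \<Delta>"
| RuleN: "deriv (add_mset (InN (NV n) x) \<Gamma>) \<Delta> \<Longrightarrow> n \<notin> nvs \<Gamma> \<Delta> \<Longrightarrow> deriv \<Gamma> \<Delta>"
| Rule0: "deriv (add_mset (InW y a) (add_mset (InN a x) \<Gamma>)) \<Delta> \<Longrightarrow>
          y \<notin> wls (add_mset (InN a x) \<Gamma>) \<Delta> \<Longrightarrow>
          deriv (add_mset (InN a x) \<Gamma>) \<Delta>"
| RuleT: "deriv (add_mset (InW x (NV n)) (add_mset (InN (NV n) x) \<Gamma>)) \<Delta> \<Longrightarrow>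
          n \<notin> nvs \<Gamma> \<Delta> \<Longrightarrow> deriv \<Gamma> \<Delta>"
| RuleW: "deriv (add_mset (InW x a) (add_mset (InN a x) \<Gamma>)) \<Delta> \<Longrightarrow>
          deriv (add_mset (InN a x) \<Gamma>) \<Delta>"
| Single: "deriv (add_mset (InW x (Sg x)) (add_mset (InN (Sg x) x) \<Gamma>)) \<Delta> \<Longrightarrow>
           deriv (add_mset (InN (Sg x) x) \<Gamma>) \<Delta>"
| RuleC: "deriv (add_mset (InN (Sg x) x) (add_mset (Sub (Sg x) a) (add_mset (InN a x) \<Gamma>))) \<Delta> \<Longrightarrow>
          deriv (add_mset (InN a x) \<Gamma>) \<Delta>"
| Repl1: "deriv (add_mset (InW y (Sg x)) (add_mset (at k x) (add_mset (at k y) \<Gamma>))) \<Delta> \<Longrightarrow>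
          deriv (add_mset (InW y (Sg x)) (add_mset (at k x) \<Gamma>)) \<Delta>"
| Repl2: "deriv (add_mset (InW y (Sg x)) (add_mset (at k x) (add_mset (at k y) \<Gamma>))) \<Delta> \<Longrightarrow>
          deriv (add_mset (InW y (Sg x)) (add_mset (at k y) \<Gamma>)) \<Delta>"

end

theory Submission
  imports Defs "HOL-Library.Countable"
begin


instance nl :: countable by countable_datatype
instance fm :: countable by countable_datatype

datatype task =
  TLAnd nat fm fm | TRAnd nat fm fm | TLOr nat fm fm | TROr nat fm fm
| TLImp nat fm fm | TRImp nat fm fm
| TLAll nat nl fm | TRAll nl fm | TLEx nl fm | TREx nat nl fm
| TRCond nat fm fm | TLCond nl nat fm fm | TRBar nl nat nl fm fm | TLBar nat nl fm fm
| TRef nl | TTr nl nl nl | TLSub nat nl nl | TRuleN nat | TRuleW nl nat | TRuleC nl nat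
| TRepP1 nat nat nat | TRepP2 nat nat nat | TRepN1 nat nat nl | TRepN2 nat nat nl

instance task :: countable by countable_datatype

lemma finite_wls: "finite (wls G D)"
proof -
  have "finite (wl_nl a)" for a by (cases a) auto
  then have "finite (wl_lf f)" for f by (cases f) auto
  then show ?thesis unfolding wls_def by auto
qed

lemma finite_nvs: "finite (nvs G D)"
proof -
  have "finite (nv_nl a)" for a by (cases a) auto
  then have "finite (nv_lf f)" for f by (cases f) auto
  then show ?thesis unfolding nvs_def by auto
qed

definition freshw :: "lf multiset \<Rightarrow> lf multiset \<Rightarrow> nat" where
  "freshw G D = (LEAST y. y \<notin> wls G D)"
definition freshn :: "lf multiset \<Rightarrow> lf multiset \<Rightarrow> nat" where
  "freshn G D = (LEAST y. y \<notin> nvs G D)"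

lemma freshw: "freshw G D \<notin> wls G D"
proof -
  obtain y where "y \<notin> wls G D" using ex_new_if_finite[OF infinite_UNIV_nat finite_wls] by blast
  then show ?thesis unfolding freshw_def by (rule LeastI)
qed

lemma freshn: "freshn G D \<notin> nvs G D"
proof -
  obtain y where "y \<notin> nvs G D" using ex_new_if_finite[OF infinite_UNIV_nat finite_nvs] by blast
  then show ?thesis unfolding freshn_def by (rule LeastI)
qed

lemma wls_add[simp]: "wls (add_mset f G) D = wl_lf f \<union> wls G D" "wls G (add_mset f D) = wl_lf f \<union> wls G D"
  unfolding wls_def by auto
lemma nvs_add[simp]: "nvs (add_mset f G) D = nv_lf f \<union> nvs G D" "nvs G (add_mset f D) = nv_lf f \<union> nvs G D"
  unfolding nvs_def by auto

lemma in_rm: "b \<noteq> a \<Longrightarrow> a \<in># M - {#b#} \<longleftrightarrow> a \<in># M"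
  by (simp add: in_diff_count)

lemma split1: "a \<in># M \<Longrightarrow> M = add_mset a (M - {#a#})" by simp

lemma split2: "a \<in># M \<Longrightarrow> b \<in># M \<Longrightarrow> a \<noteq> b \<Longrightarrow> M = add_mset a (add_mset b (M - {#a#} - {#b#}))"
  by (metis in_rm insert_DiffM)

fun app :: "task \<Rightarrow> lf multiset \<Rightarrow> lf multiset \<Rightarrow> bool" where
  "app (TLAnd x A B) G D = (Lab x (And A B) \<in># G)"
| "app (TRAnd x A B) G D = (Lab x (And A B) \<in># D)"
| "app (TLOr x A B) G D = (Lab x (Or A B) \<in># G)"
| "app (TROr x A B) G D = (Lab x (Or A B) \<in># D)"
| "app (TLImp x A B) G D = (Lab x (Imp A B) \<in># G)"
| "app (TRImp x A B) G D = (Lab x (Imp A B) \<in># D)"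
| "app (TLAll y a A) G D = (InW y a \<in># G \<and> AllF a A \<in># G)"
| "app (TRAll a A) G D = (AllF a A \<in># D)"
| "app (TLEx a A) G D = (ExF a A \<in># G)"
| "app (TREx y a A) G D = (InW y a \<in># G \<and> ExF a A \<in># D)"
| "app (TRCond x A B) G D = (Lab x (Cond A B) \<in># D)"
| "app (TLCond a x A B) G D = (InN a x \<in># G \<and> Lab x (Cond A B) \<in># G)"
| "app (TRBar c x a A B) G D = (InN c x \<in># G \<and> Sub c a \<in># G \<and> Cnd x a A B \<in># D)"
| "app (TLBar x a A B) G D = (Cnd x a A B \<in># G)"
| "app (TRef a) G D = True"
| "app (TTr c b a) G D = (Sub c b \<in># G \<and> Sub b a \<in># G \<and> Sub c b \<noteq> Sub b a)"
| "app (TLSub y a b) G D = (InW y a \<in># G \<and> Sub a b \<in># G)"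
| "app (TRuleN x) G D = True"
| "app (TRuleW a x) G D = (InN a x \<in># G)"
| "app (TRuleC a x) G D = (InN a x \<in># G)"
| "app (TRepP1 y x p) G D = (InW y (Sg x) \<in># G \<and> Lab x (Atom p) \<in># G)"
| "app (TRepP2 y x p) G D = (InW y (Sg x) \<in># G \<and> Lab y (Atom p) \<in># G)"
| "app (TRepN1 y x a) G D = (InW y (Sg x) \<in># G \<and> InN a x \<in># G)"
| "app (TRepN2 y x a) G D = (InW y (Sg x) \<in># G \<and> InN a y \<in># G)"

fun prems :: "task \<Rightarrow> lf multiset \<Rightarrow> lf multiset \<Rightarrow> (lf multiset \<times> lf multiset) set" where
  "prems (TLAnd x A B) G D = {(add_mset (Lab x A) (add_mset (Lab x B) (G - {#Lab x (And A B)#})), D)}"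
| "prems (TRAnd x A B) G D = {(G, add_mset (Lab x A) (D - {#Lab x (And A B)#})),
                              (G, add_mset (Lab x B) (D - {#Lab x (And A B)#}))}"
| "prems (TLOr x A B) G D = {(add_mset (Lab x A) (G - {#Lab x (Or A B)#}), D),
                             (add_mset (Lab x B) (G - {#Lab x (Or A B)#}), D)}"
| "prems (TROr x A B) G D = {(G, add_mset (Lab x A) (add_mset (Lab x B) (D - {#Lab x (Or A B)#})))}"
| "prems (TLImp x A B) G D = {(G - {#Lab x (Imp A B)#}, add_mset (Lab x A) D),
                              (add_mset (Lab x B) (G - {#Lab x (Imp A B)#}), D)}"
| "prems (TRImp x A B) G D = {(add_mset (Lab x A) G, add_mset (Lab x B) (D - {#Lab x (Imp A B)#}))}"
| "prems (TLAll y a A) G D = {(add_mset (Lab y A) G, D)}"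
| "prems (TRAll a A) G D = {(add_mset (InW (freshw G D) a) G, add_mset (Lab (freshw G D) A) (D - {#AllF a A#}))}"
| "prems (TLEx a A) G D = {(add_mset (InW (freshw G D) a) (add_mset (Lab (freshw G D) A) (G - {#ExF a A#})), D)}"
| "prems (TREx y a A) G D = {(G, add_mset (Lab y A) D)}"
| "prems (TRCond x A B) G D = {(add_mset (InN (NV (freshn G D)) x) (add_mset (ExF (NV (freshn G D)) A) G),
                                add_mset (Cnd x (NV (freshn G D)) A B) (D - {#Lab x (Cond A B)#}))}"
| "prems (TLCond a x A B) G D = {(G, add_mset (ExF a A) D), (add_mset (Cnd x a A B) G, D)}"
| "prems (TRBar c x a A B) G D = {(G, add_mset (ExF c A) D), (G, add_mset (AllF c (Imp A B)) D)}"
| "prems (TLBar x a A B) G D = {(add_mset (InN (NV (freshn G D)) x) (add_mset (Sub (NV (freshn G D)) a)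
                 (add_mset (ExF (NV (freshn G D)) A) (add_mset (AllF (NV (freshn G D)) (Imp A B)) (G - {#Cnd x a A B#})))), D)}"
| "prems (TRef a) G D = {(add_mset (Sub a a) G, D)}"
| "prems (TTr c b a) G D = {(add_mset (Sub c a) G, D)}"
| "prems (TLSub y a b) G D = {(add_mset (InW y b) G, D)}"
| "prems (TRuleN x) G D = {(add_mset (InN (NV (freshn G D)) x) G, D)}"
| "prems (TRuleW a x) G D = {(add_mset (InW x a) G, D)}"
| "prems (TRuleC a x) G D = {(add_mset (InN (Sg x) x) (add_mset (Sub (Sg x) a) G), D)}"
| "prems (TRepP1 y x p) G D = {(add_mset (Lab y (Atom p)) G, D)}"
| "prems (TRepP2 y x p) G D = {(add_mset (Lab x (Atom p)) G, D)}"
| "prems (TRepN1 y x a) G D = {(add_mset (InN a y) G, D)}"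
| "prems (TRepN2 y x a) G D = {(add_mset (InN a x) G, D)}"





lemma prems_ne: "prems t G D \<noteq> {}" by (cases t) auto


lemma ob1: "a \<in># M \<Longrightarrow> \<exists>R. M = add_mset a R" by (metis insert_DiffM)
lemma ob2: "a \<in># M \<Longrightarrow> b \<in># M \<Longrightarrow> a \<noteq> b \<Longrightarrow> \<exists>R. M = add_mset a (add_mset b R)"
  by (metis split2)


lemma c_LAnd: "Lab x (And A B) \<in># G \<Longrightarrow> deriv (add_mset (Lab x A) (add_mset (Lab x B) (G - {#Lab x (And A B)#}))) D \<Longrightarrow> deriv G D"
  by (erule ob1[THEN exE]) (simp add: deriv.LAnd)
lemma c_RAnd: "Lab x (And A B) \<in># D \<Longrightarrow> deriv G (add_mset (Lab x A) (D - {#Lab x (And A B)#})) \<Longrightarrow>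
   deriv G (add_mset (Lab x B) (D - {#Lab x (And A B)#})) \<Longrightarrow> deriv G D"
  by (erule ob1[THEN exE]) (simp add: deriv.RAnd)
lemma c_LOr: "Lab x (Or A B) \<in># G \<Longrightarrow> deriv (add_mset (Lab x A) (G - {#Lab x (Or A B)#})) D \<Longrightarrow>
   deriv (add_mset (Lab x B) (G - {#Lab x (Or A B)#})) D \<Longrightarrow> deriv G D"
  by (erule ob1[THEN exE]) (simp add: deriv.LOr)
lemma c_ROr: "Lab x (Or A B) \<in># D \<Longrightarrow> deriv G (add_mset (Lab x A) (add_mset (Lab x B) (D - {#Lab x (Or A B)#}))) \<Longrightarrow> deriv G D"
  by (erule ob1[THEN exE]) (simp add: deriv.ROr)
lemma c_LImp: "Lab x (Imp A B) \<in># G \<Longrightarrow> deriv (G - {#Lab x (Imp A B)#}) (add_mset (Lab x A) D) \<Longrightarrow>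
   deriv (add_mset (Lab x B) (G - {#Lab x (Imp A B)#})) D \<Longrightarrow> deriv G D"
  by (erule ob1[THEN exE]) (simp add: deriv.LImp)
lemma c_RImp: "Lab x (Imp A B) \<in># D \<Longrightarrow> deriv (add_mset (Lab x A) G) (add_mset (Lab x B) (D - {#Lab x (Imp A B)#})) \<Longrightarrow> deriv G D"
  by (erule ob1[THEN exE]) (simp add: deriv.RImp)
lemma c_LAll: assumes "InW y a \<in># G" "AllF a A \<in># G" "deriv (add_mset (Lab y A) G) D" shows "deriv G D"
proof -
  obtain R where e: "G = add_mset (InW y a) (add_mset (AllF a A) R)" using ob2[OF assms(1,2)] by auto
  show ?thesis using assms(3) deriv.LAll[of y A a R D] unfolding e by blast
qed
lemma c_RAll: assumes "AllF a A \<in># D" "deriv (add_mset (InW (freshw G D) a) G) (add_mset (Lab (freshw G D) A) (D - {#AllF a A#}))"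
  shows "deriv G D"
proof -
  obtain R where e: "D = add_mset (AllF a A) R" using ob1[OF assms(1)] by blast
  have f: "freshw G D \<notin> wls G (add_mset (AllF a A) R)" using freshw[of G D] unfolding e .
  have "deriv (add_mset (InW (freshw G D) a) G) (add_mset (Lab (freshw G D) A) R)" using assms(2) unfolding e by simp
  from deriv.RAll[OF this f] show ?thesis unfolding e .
qed
lemma c_LEx: assumes "ExF a A \<in># G" "deriv (add_mset (InW (freshw G D) a) (add_mset (Lab (freshw G D) A) (G - {#ExF a A#}))) D"
  shows "deriv G D"
proof -
  obtain R where e: "G = add_mset (ExF a A) R" using ob1[OF assms(1)] by blast
  have f: "freshw G D \<notin> wls (add_mset (ExF a A) R) D" using freshw[of G D] unfolding e .
  have "deriv (add_mset (InW (freshw G D) a) (add_mset (Lab (freshw G D) A) R)) D" using assms(2) unfolding e by simp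
  from deriv.LEx[OF this f] show ?thesis unfolding e .
qed
lemma c_REx: assumes "InW y a \<in># G" "ExF a A \<in># D" "deriv G (add_mset (Lab y A) D)" shows "deriv G D"
proof -
  obtain R where e: "G = add_mset (InW y a) R" using ob1[OF assms(1)] by blast
  obtain S where e2: "D = add_mset (ExF a A) S" using ob1[OF assms(2)] by blast
  have "deriv (add_mset (InW y a) R) (add_mset (Lab y A) (add_mset (ExF a A) S))" using assms(3) unfolding e e2 .
  from deriv.REx[OF this] show ?thesis unfolding e e2 .
qed
lemma c_RCond: assumes "Lab x (Cond A B) \<in># D"
  "deriv (add_mset (InN (NV (freshn G D)) x) (add_mset (ExF (NV (freshn G D)) A) G))
                                (add_mset (Cnd x (NV (freshn G D)) A B) (D - {#Lab x (Cond A B)#}))"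
  shows "deriv G D"
proof -
  obtain R where e: "D = add_mset (Lab x (Cond A B)) R" using ob1[OF assms(1)] by blast
  have f: "freshn G D \<notin> nvs G (add_mset (Lab x (Cond A B)) R)" using freshn[of G D] unfolding e .
  have "deriv (add_mset (InN (NV (freshn G D)) x) (add_mset (ExF (NV (freshn G D)) A) G))
                (add_mset (Cnd x (NV (freshn G D)) A B) R)" using assms(2) unfolding e by simp
  from deriv.RCond[OF this f] show ?thesis unfolding e .
qed
lemma c_LCond: assumes "InN a x \<in># G" "Lab x (Cond A B) \<in># G" "deriv G (add_mset (ExF a A) D)" "deriv (add_mset (Cnd x a A B) G) D"
  shows "deriv G D"
proof -
  obtain R where e: "G = add_mset (InN a x) (add_mset (Lab x (Cond A B)) R)" using ob2[OF assms(1,2)] by auto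
  show ?thesis using assms(3,4) deriv.LCond[of a x A B R D] unfolding e by blast
qed
lemma c_RBar: assumes "InN c x \<in># G" "Sub c a \<in># G" "Cnd x a A B \<in># D"
  "deriv G (add_mset (ExF c A) D)" "deriv G (add_mset (AllF c (Imp A B)) D)" shows "deriv G D"
proof -
  obtain R where e: "G = add_mset (InN c x) (add_mset (Sub c a) R)" using ob2[OF assms(1,2)] by auto
  obtain S where e2: "D = add_mset (Cnd x a A B) S" using ob1[OF assms(3)] by blast
  have "deriv (add_mset (InN c x) (add_mset (Sub c a) R)) (add_mset (Cnd x a A B) (add_mset (ExF c A) S))"
     "deriv (add_mset (InN c x) (add_mset (Sub c a) R)) (add_mset (Cnd x a A B) (add_mset (AllF c (Imp A B)) S))"
    using assms(4,5) unfolding e e2 by (simp_all add: add_mset_commute[of _ "Cnd x a A B"])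
  from deriv.RBar[OF this] show ?thesis unfolding e e2 .
qed
lemma c_LBar: assumes "Cnd x a A B \<in># G" "deriv (add_mset (InN (NV (freshn G D)) x) (add_mset (Sub (NV (freshn G D)) a)
                 (add_mset (ExF (NV (freshn G D)) A) (add_mset (AllF (NV (freshn G D)) (Imp A B)) (G - {#Cnd x a A B#}))))) D"
  shows "deriv G D"
proof -
  obtain R where e: "G = add_mset (Cnd x a A B) R" using ob1[OF assms(1)] by blast
  have f: "freshn G D \<notin> nvs (add_mset (Cnd x a A B) R) D" using freshn[of G D] unfolding e .
  have "deriv (add_mset (InN (NV (freshn G D)) x) (add_mset (Sub (NV (freshn G D)) a)
                 (add_mset (ExF (NV (freshn G D)) A) (add_mset (AllF (NV (freshn G D)) (Imp A B)) R)))) D"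
    using assms(2) unfolding e by simp
  from deriv.LBar[OF this f] show ?thesis unfolding e .
qed
lemma c_Tr: assumes "Sub c b \<in># G" "Sub b a \<in># G" "Sub c b \<noteq> Sub b a" "deriv (add_mset (Sub c a) G) D" shows "deriv G D"
proof -
  obtain R where e: "G = add_mset (Sub c b) (add_mset (Sub b a) R)" using ob2[OF assms(1,2) assms(3)] by blast
  show ?thesis using assms(4) deriv.Tr[of c a b R D] unfolding e by blast
qed
lemma c_LSub: assumes "InW y a \<in># G" "Sub a b \<in># G" "deriv (add_mset (InW y b) G) D" shows "deriv G D"
proof -
  obtain R where e: "G = add_mset (InW y a) (add_mset (Sub a b) R)" using ob2[OF assms(1,2)] by auto
  have "deriv (add_mset (InW y a) (add_mset (Sub a b) (add_mset (InW y b) R))) D"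
    using assms(3) unfolding e by (simp add: add_mset_commute[of "InW y b"])
  from deriv.LSub[OF this] show ?thesis unfolding e .
qed
lemma c_RuleW: assumes "InN a x \<in># G" "deriv (add_mset (InW x a) G) D" shows "deriv G D"
proof -
  obtain R where e: "G = add_mset (InN a x) R" using ob1[OF assms(1)] by blast
  show ?thesis using assms(2) deriv.RuleW[of x a R D] unfolding e by blast
qed
lemma c_RuleC: assumes "InN a x \<in># G" "deriv (add_mset (InN (Sg x) x) (add_mset (Sub (Sg x) a) G)) D" shows "deriv G D"
proof -
  obtain R where e: "G = add_mset (InN a x) R" using ob1[OF assms(1)] by blast
  show ?thesis using assms(2) deriv.RuleC[of x a R D] unfolding e by blast
qed
lemma c_Repl1: assumes "InW y (Sg x) \<in># G" "at k x \<in># G" "at k x \<noteq> InW y (Sg x)" "deriv (add_mset (at k y) G) D" shows "deriv G D"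
proof -
  obtain R where e: "G = add_mset (InW y (Sg x)) (add_mset (at k x) R)" using ob2[OF assms(1,2) not_sym[OF assms(3)]] by blast
  have "deriv (add_mset (InW y (Sg x)) (add_mset (at k x) (add_mset (at k y) R))) D"
    using assms(4) unfolding e by (simp add: add_mset_commute[of "at k y"])
  from deriv.Repl1[OF this] show ?thesis unfolding e .
qed
lemma c_Repl2: assumes "InW y (Sg x) \<in># G" "at k y \<in># G" "at k y \<noteq> InW y (Sg x)" "deriv (add_mset (at k x) G) D" shows "deriv G D"
proof -
  obtain R where e: "G = add_mset (InW y (Sg x)) (add_mset (at k y) R)" using ob2[OF assms(1,2) not_sym[OF assms(3)]] by blast
  have "deriv (add_mset (InW y (Sg x)) (add_mset (at k x) (add_mset (at k y) R))) D"
    using assms(4) unfolding e by (simp add: add_mset_commute[of "at k x"])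
  from deriv.Repl2[OF this] show ?thesis unfolding e .
qed

lemma sound: assumes "app t G D" "\<forall>p\<in>prems t G D. deriv (fst p) (snd p)" shows "deriv G D"
proof (cases t)
  case (TLAnd x A B) then show ?thesis using assms c_LAnd[of x A B G D] by simp
next case (TRAnd x A B) then show ?thesis using assms c_RAnd[of x A B D G] by simp
next case (TLOr x A B) then show ?thesis using assms c_LOr[of x A B G D] by simp
next case (TROr x A B) then show ?thesis using assms c_ROr[of x A B D G] by simp
next case (TLImp x A B) then show ?thesis using assms c_LImp[of x A B G D] by simp
next case (TRImp x A B) then show ?thesis using assms c_RImp[of x A B D G] by simp
next case (TLAll y a A) then show ?thesis using assms c_LAll[of y a G A D] by simp
next case (TRAll a A) then show ?thesis using assms c_RAll[of a A D G] by simp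
next case (TLEx a A) then show ?thesis using assms c_LEx[of a A G D] by simp
next case (TREx y a A) then show ?thesis using assms c_REx[of y a G A D] by simp
next case (TRCond x A B) then show ?thesis using assms c_RCond[of x A B D G] by simp
next case (TLCond a x A B) then show ?thesis using assms c_LCond[of a x G A B D] by simp
next case (TRBar c x a A B) then show ?thesis using assms c_RBar[of c x G a A B D] by simp
next case (TLBar x a A B) then show ?thesis using assms c_LBar[of x a A B G D] by simp
next case (TRef a) then show ?thesis using assms deriv.Ref[of a G D] by simp
next case (TTr c b a) then show ?thesis using assms c_Tr[of c b G a D] by simp
next case (TLSub y a b) then show ?thesis using assms c_LSub[of y a G b D] by simp
next case (TRuleN x) then show ?thesis using assms deriv.RuleN[of "freshn G D" x G D] freshn[of G D] by simp
next case (TRuleW a x) then show ?thesis using assms c_RuleW[of a x G D] by simp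
next case (TRuleC a x) then show ?thesis using assms c_RuleC[of a x G D] by simp
next case (TRepP1 y x p) then show ?thesis using assms c_Repl1[of y x G "AtP p" D] by simp
next case (TRepP2 y x p) then show ?thesis using assms c_Repl2[of y x G "AtP p" D] by simp
next case (TRepN1 y x a) then show ?thesis using assms c_Repl1[of y x G "AtN a" D] by simp
next case (TRepN2 y x a) then show ?thesis using assms c_Repl2[of y x G "AtN a" D] by simp
qed




fun remL :: "task \<Rightarrow> lf set" where
  "remL (TLAnd x A B) = {Lab x (And A B)}"
| "remL (TLOr x A B) = {Lab x (Or A B)}"
| "remL (TLImp x A B) = {Lab x (Imp A B)}"
| "remL (TLEx a A) = {ExF a A}"
| "remL (TLBar x a A B) = {Cnd x a A B}"
| "remL _ = {}"

fun remR :: "task \<Rightarrow> lf set" where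
  "remR (TRAnd x A B) = {Lab x (And A B)}"
| "remR (TROr x A B) = {Lab x (Or A B)}"
| "remR (TRImp x A B) = {Lab x (Imp A B)}"
| "remR (TRCond x A B) = {Lab x (Cond A B)}"
| "remR (TRAll a A) = {AllF a A}"
| "remR _ = {}"

lemma persist_prems:
  assumes "p \<in> prems t G D"
  shows "f \<in># G \<Longrightarrow> f \<notin> remL t \<Longrightarrow> f \<in># fst p"
    and "f \<in># D \<Longrightarrow> f \<notin> remR t \<Longrightarrow> f \<in># snd p"
  using assms by (cases t; auto simp: in_rm)+

definition tsk :: "nat \<Rightarrow> task" where "tsk i = from_nat (fst (prod_decode i))"

lemma inf_often: "\<exists>j\<ge>i. tsk j = t"
proof -
  have "tsk (prod_encode (to_nat t, i)) = t" unfolding tsk_def by simp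
  moreover have "i \<le> prod_encode (to_nat t, i)" by (rule le_prod_encode_2)
  ultimately show ?thesis by blast
qed

definition dv :: "lf multiset \<times> lf multiset \<Rightarrow> bool" where "dv p = deriv (fst p) (snd p)"

definition step :: "task \<Rightarrow> lf multiset \<times> lf multiset \<Rightarrow> lf multiset \<times> lf multiset" where
  "step t s = (if app t (fst s) (snd s) then (SOME p. p \<in> prems t (fst s) (snd s) \<and> \<not> dv p) else s)"

primrec sq :: "lf multiset \<times> lf multiset \<Rightarrow> nat \<Rightarrow> lf multiset \<times> lf multiset" where
  "sq s0 0 = s0"
| "sq s0 (Suc i) = step (tsk i) (sq s0 i)"

lemma step_good: assumes "\<not> dv s" "app t (fst s) (snd s)"
  shows "step t s \<in> prems t (fst s) (snd s) \<and> \<not> dv (step t s)"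
proof -
  have "\<not> (\<forall>p\<in>prems t (fst s) (snd s). dv p)"
    using sound[OF assms(2)] assms(1) unfolding dv_def by blast
  then obtain p where "p \<in> prems t (fst s) (snd s) \<and> \<not> dv p" by blast
  then show ?thesis unfolding step_def using assms(2) someI[of "\<lambda>p. p \<in> prems t (fst s) (snd s) \<and> \<not> dv p" p] by simp
qed

lemma nd_sq: "\<not> dv s0 \<Longrightarrow> \<not> dv (sq s0 i)"
proof (induction i)
  case 0 then show ?case by simp
next
  case (Suc i) then show ?case using step_good[of "sq s0 i" "tsk i"] by (simp add: step_def)
qed

lemma sq_app: "\<not> dv s0 \<Longrightarrow> app (tsk i) (fst (sq s0 i)) (snd (sq s0 i)) \<Longrightarrow>
   sq s0 (Suc i) \<in> prems (tsk i) (fst (sq s0 i)) (snd (sq s0 i))"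
  using step_good[OF nd_sq] by simp

lemma persist1:
  assumes "\<not> dv s0"
  shows "f \<in># fst (sq s0 i) \<Longrightarrow> f \<notin> remL (tsk i) \<Longrightarrow> f \<in># fst (sq s0 (Suc i))"
    and "f \<in># snd (sq s0 i) \<Longrightarrow> f \<notin> remR (tsk i) \<Longrightarrow> f \<in># snd (sq s0 (Suc i))"
proof -
  assume a: "f \<in># fst (sq s0 i)" "f \<notin> remL (tsk i)"
  show "f \<in># fst (sq s0 (Suc i))"
  proof (cases "app (tsk i) (fst (sq s0 i)) (snd (sq s0 i))")
    case True
    then show ?thesis using persist_prems(1)[OF sq_app[OF assms True] a] by simp
  next
    case False then show ?thesis using a by (simp add: step_def)
  qed
next
  assume a: "f \<in># snd (sq s0 i)" "f \<notin> remR (tsk i)"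
  show "f \<in># snd (sq s0 (Suc i))"
  proof (cases "app (tsk i) (fst (sq s0 i)) (snd (sq s0 i))")
    case True
    then show ?thesis using persist_prems(2)[OF sq_app[OF assms True] a] by simp
  next
    case False then show ?thesis using a by (simp add: step_def)
  qed
qed

lemma persistL:
  assumes "\<not> dv s0" "\<forall>t. f \<notin> remL t" "f \<in># fst (sq s0 i)" "i \<le> j"
  shows "f \<in># fst (sq s0 j)"
  using assms(4,3)
proof (induction j)
  case 0 then show ?case by simp
next
  case (Suc j)
  then show ?case using persist1(1)[OF assms(1)] assms(2) by (cases "i = Suc j") auto
qed

lemma persistR:
  assumes "\<not> dv s0" "\<forall>t. f \<notin> remR t" "f \<in># snd (sq s0 i)" "i \<le> j"
  shows "f \<in># snd (sq s0 j)"
  using assms(4,3)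
proof (induction j)
  case 0 then show ?case by simp
next
  case (Suc j)
  then show ?case using persist1(2)[OF assms(1)] assms(2) by (cases "i = Suc j") auto
qed

lemma satL:
  assumes "\<not> dv s0" "f \<in># fst (sq s0 i)" "\<forall>t'. f \<in> remL t' \<longrightarrow> t' = t"
  shows "\<exists>j\<ge>i. f \<in># fst (sq s0 j) \<and> tsk j = t"
proof -
  define j where "j = (LEAST j. i \<le> j \<and> tsk j = t)"
  have j: "i \<le> j" "tsk j = t" using LeastI_ex[OF inf_often[of i t]] unfolding j_def by auto
  have m: "k < j \<Longrightarrow> i \<le> k \<Longrightarrow> tsk k \<noteq> t" for k using not_less_Least[of k "\<lambda>j. i \<le> j \<and> tsk j = t"]
    unfolding j_def by auto
  have all: "\<forall>k. i + k \<le> j \<longrightarrow> f \<in># fst (sq s0 (i + k))"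
  proof
    fix k show "i + k \<le> j \<longrightarrow> f \<in># fst (sq s0 (i + k))"
    proof (induction k)
      case 0 then show ?case using assms(2) by simp
    next
      case (Suc k)
      show ?case
      proof
        assume "i + Suc k \<le> j"
        then have "f \<in># fst (sq s0 (i + k))" "tsk (i + k) \<noteq> t" using Suc m[of "i+k"] by auto
        then show "f \<in># fst (sq s0 (i + Suc k))" using persist1(1)[OF assms(1)] assms(3) by auto
      qed
    qed
  qed
  have "f \<in># fst (sq s0 j)" using spec[OF all, of "j - i"] j(1) by simp
  then show ?thesis using j by blast
qed

lemma satR:
  assumes "\<not> dv s0" "f \<in># snd (sq s0 i)" "\<forall>t'. f \<in> remR t' \<longrightarrow> t' = t"
  shows "\<exists>j\<ge>i. f \<in># snd (sq s0 j) \<and> tsk j = t"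
proof -
  define j where "j = (LEAST j. i \<le> j \<and> tsk j = t)"
  have j: "i \<le> j" "tsk j = t" using LeastI_ex[OF inf_often[of i t]] unfolding j_def by auto
  have m: "k < j \<Longrightarrow> i \<le> k \<Longrightarrow> tsk k \<noteq> t" for k using not_less_Least[of k "\<lambda>j. i \<le> j \<and> tsk j = t"]
    unfolding j_def by auto
  have all: "\<forall>k. i + k \<le> j \<longrightarrow> f \<in># snd (sq s0 (i + k))"
  proof
    fix k show "i + k \<le> j \<longrightarrow> f \<in># snd (sq s0 (i + k))"
    proof (induction k)
      case 0 then show ?case using assms(2) by simp
    next
      case (Suc k)
      show ?case
      proof
        assume "i + Suc k \<le> j"
        then have "f \<in># snd (sq s0 (i + k))" "tsk (i + k) \<noteq> t" using Suc m[of "i+k"] by auto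
        then show "f \<in># snd (sq s0 (i + Suc k))" using persist1(2)[OF assms(1)] assms(3) by auto
      qed
    qed
  qed
  have "f \<in># snd (sq s0 j)" using spec[OF all, of "j - i"] j(1) by simp
  then show ?thesis using j by blast
qed




lemma nrL: "\<forall>t. InW y a \<notin> remL t" "\<forall>t. InN a x \<notin> remL t" "\<forall>t. Sub a b \<notin> remL t"
  "\<forall>t. AllF a A \<notin> remL t" "\<forall>t. Lab x (Cond A B) \<notin> remL t" "\<forall>t. Lab x (Atom p) \<notin> remL t"
  by (intro allI; case_tac t; simp)+
lemma nrR: "\<forall>t. ExF a A \<notin> remR t" "\<forall>t. Cnd x a A B \<notin> remR t" "\<forall>t. Lab x (Atom p) \<notin> remR t"
  by (intro allI; case_tac t; simp)+

lemma rL: "\<forall>t'. Lab x (And A B) \<in> remL t' \<longrightarrow> t' = TLAnd x A B"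
  "\<forall>t'. Lab x (Or A B) \<in> remL t' \<longrightarrow> t' = TLOr x A B"
  "\<forall>t'. Lab x (Imp A B) \<in> remL t' \<longrightarrow> t' = TLImp x A B"
  "\<forall>t'. ExF a A \<in> remL t' \<longrightarrow> t' = TLEx a A"
  "\<forall>t'. Cnd x a A B \<in> remL t' \<longrightarrow> t' = TLBar x a A B"
  by (intro allI; case_tac t'; simp)+
lemma rR: "\<forall>t'. Lab x (And A B) \<in> remR t' \<longrightarrow> t' = TRAnd x A B"
  "\<forall>t'. Lab x (Or A B) \<in> remR t' \<longrightarrow> t' = TROr x A B"
  "\<forall>t'. Lab x (Imp A B) \<in> remR t' \<longrightarrow> t' = TRImp x A B"
  "\<forall>t'. Lab x (Cond A B) \<in> remR t' \<longrightarrow> t' = TRCond x A B"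
  "\<forall>t'. AllF a A \<in> remR t' \<longrightarrow> t' = TRAll a A"
  by (intro allI; case_tac t'; simp)+

locale hk =
  fixes s0 :: "lf multiset \<times> lf multiset"
  assumes nd: "\<not> dv s0"
begin

definition G where "G = (\<Union>i. set_mset (fst (sq s0 i)))"
definition D where "D = (\<Union>i. set_mset (snd (sq s0 i)))"

lemma inG: "f \<in># fst (sq s0 i) \<Longrightarrow> f \<in> G" unfolding G_def by auto
lemma inD: "f \<in># snd (sq s0 i) \<Longrightarrow> f \<in> D" unfolding D_def by auto
lemma GE: "f \<in> G \<Longrightarrow> \<exists>i. f \<in># fst (sq s0 i)" unfolding G_def by auto
lemma DE: "f \<in> D \<Longrightarrow> \<exists>i. f \<in># snd (sq s0 i)" unfolding D_def by auto

lemma oneL: assumes "f \<in> G" "\<forall>t'. f \<in> remL t' \<longrightarrow> t' = t"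
  shows "\<exists>j. f \<in># fst (sq s0 j) \<and> tsk j = t"
  using GE[OF assms(1)] satL[OF nd _ assms(2)] by blast
lemma oneR: assumes "f \<in> D" "\<forall>t'. f \<in> remR t' \<longrightarrow> t' = t"
  shows "\<exists>j. f \<in># snd (sq s0 j) \<and> tsk j = t"
  using DE[OF assms(1)] satR[OF nd _ assms(2)] by blast

lemma twoL: assumes "f \<in> G" "g \<in> G" "\<forall>t. f \<notin> remL t" "\<forall>t. g \<notin> remL t"
  shows "\<exists>j. f \<in># fst (sq s0 j) \<and> g \<in># fst (sq s0 j) \<and> tsk j = t"
proof -
  obtain i1 i2 where i: "f \<in># fst (sq s0 i1)" "g \<in># fst (sq s0 i2)" using GE[OF assms(1)] GE[OF assms(2)] by blast
  let ?m = "max i1 i2"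
  have "f \<in># fst (sq s0 ?m)" using persistL[OF nd assms(3) i(1)] by simp
  then obtain j where j: "j \<ge> ?m" "f \<in># fst (sq s0 j)" "tsk j = t" using satL[OF nd _, of f ?m t] assms(3) by blast
  have "g \<in># fst (sq s0 j)" using persistL[OF nd assms(4) i(2)] j(1) by simp
  then show ?thesis using j by blast
qed

lemma twoLR: assumes "f \<in> G" "g \<in> D" "\<forall>t. f \<notin> remL t" "\<forall>t. g \<notin> remR t"
  shows "\<exists>j. f \<in># fst (sq s0 j) \<and> g \<in># snd (sq s0 j) \<and> tsk j = t"
proof -
  obtain i1 i2 where i: "f \<in># fst (sq s0 i1)" "g \<in># snd (sq s0 i2)" using GE[OF assms(1)] DE[OF assms(2)] by blast
  let ?m = "max i1 i2"
  have "f \<in># fst (sq s0 ?m)" using persistL[OF nd assms(3) i(1)] by simp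
  then obtain j where j: "j \<ge> ?m" "f \<in># fst (sq s0 j)" "tsk j = t" using satL[OF nd _, of f ?m t] assms(3) by blast
  have "g \<in># snd (sq s0 j)" using persistR[OF nd assms(4) i(2)] j(1) by simp
  then show ?thesis using j by blast
qed

lemma threeL: assumes "f \<in> G" "g \<in> G" "h \<in> D" "\<forall>t. f \<notin> remL t" "\<forall>t. g \<notin> remL t" "\<forall>t. h \<notin> remR t"
  shows "\<exists>j. f \<in># fst (sq s0 j) \<and> g \<in># fst (sq s0 j) \<and> h \<in># snd (sq s0 j) \<and> tsk j = t"
proof -
  obtain i1 i2 i3 where i: "f \<in># fst (sq s0 i1)" "g \<in># fst (sq s0 i2)" "h \<in># snd (sq s0 i3)" using GE[OF assms(1)] GE[OF assms(2)] DE[OF assms(3)] by blast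
  let ?m = "max i1 (max i2 i3)"
  have "f \<in># fst (sq s0 ?m)" using persistL[OF nd assms(4) i(1)] by simp
  then obtain j where j: "j \<ge> ?m" "f \<in># fst (sq s0 j)" "tsk j = t" using satL[OF nd _, of f ?m t] assms(4) by blast
  have "g \<in># fst (sq s0 j)" using persistL[OF nd assms(5) i(2)] j(1) by simp
  moreover have "h \<in># snd (sq s0 j)" using persistR[OF nd assms(6) i(3)] j(1) by simp
  ultimately show ?thesis using j by blast
qed

lemma stepP: "tsk j = t \<Longrightarrow> app t (fst (sq s0 j)) (snd (sq s0 j)) \<Longrightarrow>
   sq s0 (Suc j) \<in> prems t (fst (sq s0 j)) (snd (sq s0 j))"
  using sq_app[OF nd] by blast

lemma cons_atom: "Lab z (Atom p) \<in> G \<Longrightarrow> Lab z (Atom p) \<in> D \<Longrightarrow> False"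
proof -
  assume a: "Lab z (Atom p) \<in> G" "Lab z (Atom p) \<in> D"
  obtain j where j: "Lab z (Atom p) \<in># fst (sq s0 j)" "Lab z (Atom p) \<in># snd (sq s0 j)"
    using twoLR[OF a nrL(6) nrR(3)] by blast
  obtain R S where "fst (sq s0 j) = add_mset (Lab z (Atom p)) R" "snd (sq s0 j) = add_mset (Lab z (Atom p)) S"
    using ob1[OF j(1)] ob1[OF j(2)] by blast
  then have "dv (sq s0 j)" unfolding dv_def using deriv.init by simp
  then show False using nd_sq[OF nd] by blast
qed

lemma cons_bot: "Lab z Bot \<in> G \<Longrightarrow> False"
proof -
  assume a: "Lab z Bot \<in> G"
  obtain j where j: "Lab z Bot \<in># fst (sq s0 j)" using GE[OF a] by blast
  then obtain R where "fst (sq s0 j) = add_mset (Lab z Bot) R" using ob1[OF j] by blast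
  then have "dv (sq s0 j)" unfolding dv_def using deriv.LBot by simp
  then show False using nd_sq[OF nd] by blast
qed

lemma sLAnd: "Lab x (And A B) \<in> G \<Longrightarrow> Lab x A \<in> G \<and> Lab x B \<in> G"
proof -
  assume "Lab x (And A B) \<in> G"
  then obtain j where j: "Lab x (And A B) \<in># fst (sq s0 j)" "tsk j = TLAnd x A B" using oneL[OF _ rL(1)] by blast
  then show ?thesis using stepP[OF j(2)] by (auto intro: inG[of _ "Suc j"])
qed

lemma sRAnd: "Lab x (And A B) \<in> D \<Longrightarrow> Lab x A \<in> D \<or> Lab x B \<in> D"
proof -
  assume "Lab x (And A B) \<in> D"
  then obtain j where j: "Lab x (And A B) \<in># snd (sq s0 j)" "tsk j = TRAnd x A B" using oneR[OF _ rR(1)] by blast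
  then show ?thesis using stepP[OF j(2)] by (auto intro: inD[of _ "Suc j"])
qed

lemma sLOr: "Lab x (Or A B) \<in> G \<Longrightarrow> Lab x A \<in> G \<or> Lab x B \<in> G"
proof -
  assume "Lab x (Or A B) \<in> G"
  then obtain j where j: "Lab x (Or A B) \<in># fst (sq s0 j)" "tsk j = TLOr x A B" using oneL[OF _ rL(2)] by blast
  then show ?thesis using stepP[OF j(2)] by (auto intro: inG[of _ "Suc j"])
qed

lemma sROr: "Lab x (Or A B) \<in> D \<Longrightarrow> Lab x A \<in> D \<and> Lab x B \<in> D"
proof -
  assume "Lab x (Or A B) \<in> D"
  then obtain j where j: "Lab x (Or A B) \<in># snd (sq s0 j)" "tsk j = TROr x A B" using oneR[OF _ rR(2)] by blast
  then show ?thesis using stepP[OF j(2)] by (auto intro: inD[of _ "Suc j"])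
qed

lemma sLImp: "Lab x (Imp A B) \<in> G \<Longrightarrow> Lab x A \<in> D \<or> Lab x B \<in> G"
proof -
  assume "Lab x (Imp A B) \<in> G"
  then obtain j where j: "Lab x (Imp A B) \<in># fst (sq s0 j)" "tsk j = TLImp x A B" using oneL[OF _ rL(3)] by blast
  then show ?thesis using stepP[OF j(2)] by (auto intro: inG[of _ "Suc j"] inD[of _ "Suc j"])
qed

lemma sRImp: "Lab x (Imp A B) \<in> D \<Longrightarrow> Lab x A \<in> G \<and> Lab x B \<in> D"
proof -
  assume "Lab x (Imp A B) \<in> D"
  then obtain j where j: "Lab x (Imp A B) \<in># snd (sq s0 j)" "tsk j = TRImp x A B" using oneR[OF _ rR(3)] by blast
  then show ?thesis using stepP[OF j(2)] by (auto intro: inG[of _ "Suc j"] inD[of _ "Suc j"])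
qed

lemma sLAll: "InW y a \<in> G \<Longrightarrow> AllF a A \<in> G \<Longrightarrow> Lab y A \<in> G"
proof -
  assume a: "InW y a \<in> G" "AllF a A \<in> G"
  obtain j where j: "InW y a \<in># fst (sq s0 j)" "AllF a A \<in># fst (sq s0 j)" "tsk j = TLAll y a A"
    using twoL[OF a nrL(1) nrL(4)] by blast
  then show ?thesis using stepP[OF j(3)] by (auto intro: inG[of _ "Suc j"])
qed

lemma sRAll: "AllF a A \<in> D \<Longrightarrow> \<exists>y. InW y a \<in> G \<and> Lab y A \<in> D"
proof -
  assume "AllF a A \<in> D"
  then obtain j where j: "AllF a A \<in># snd (sq s0 j)" "tsk j = TRAll a A" using oneR[OF _ rR(5)] by blast
  let ?y = "freshw (fst (sq s0 j)) (snd (sq s0 j))"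
  have "InW ?y a \<in># fst (sq s0 (Suc j))" "Lab ?y A \<in># snd (sq s0 (Suc j))" using stepP[OF j(2)] j(1) by simp_all
  then show ?thesis using inG inD by blast
qed

lemma sLEx: "ExF a A \<in> G \<Longrightarrow> \<exists>y. InW y a \<in> G \<and> Lab y A \<in> G"
proof -
  assume "ExF a A \<in> G"
  then obtain j where j: "ExF a A \<in># fst (sq s0 j)" "tsk j = TLEx a A" using oneL[OF _ rL(4)] by blast
  let ?y = "freshw (fst (sq s0 j)) (snd (sq s0 j))"
  have "InW ?y a \<in># fst (sq s0 (Suc j))" "Lab ?y A \<in># fst (sq s0 (Suc j))" using stepP[OF j(2)] j(1) by simp_all
  then show ?thesis using inG by blast
qed

lemma sREx: "InW y a \<in> G \<Longrightarrow> ExF a A \<in> D \<Longrightarrow> Lab y A \<in> D"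
proof -
  assume a: "InW y a \<in> G" "ExF a A \<in> D"
  obtain j where j: "InW y a \<in># fst (sq s0 j)" "ExF a A \<in># snd (sq s0 j)" "tsk j = TREx y a A"
    using twoLR[OF a nrL(1) nrR(1)] by blast
  then show ?thesis using stepP[OF j(3)] by (auto intro: inD[of _ "Suc j"])
qed

lemma sRCond: "Lab x (Cond A B) \<in> D \<Longrightarrow> \<exists>n. InN (NV n) x \<in> G \<and> ExF (NV n) A \<in> G \<and> Cnd x (NV n) A B \<in> D"
proof -
  assume "Lab x (Cond A B) \<in> D"
  then obtain j where j: "Lab x (Cond A B) \<in># snd (sq s0 j)" "tsk j = TRCond x A B" using oneR[OF _ rR(4)] by blast
  let ?n = "freshn (fst (sq s0 j)) (snd (sq s0 j))"
  have "InN (NV ?n) x \<in># fst (sq s0 (Suc j))" "ExF (NV ?n) A \<in># fst (sq s0 (Suc j))" "Cnd x (NV ?n) A B \<in># snd (sq s0 (Suc j))"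
    using stepP[OF j(2)] j(1) by simp_all
  then show ?thesis using inG inD by blast
qed

lemma sLCond: "InN a x \<in> G \<Longrightarrow> Lab x (Cond A B) \<in> G \<Longrightarrow> ExF a A \<in> D \<or> Cnd x a A B \<in> G"
proof -
  assume a: "InN a x \<in> G" "Lab x (Cond A B) \<in> G"
  obtain j where j: "InN a x \<in># fst (sq s0 j)" "Lab x (Cond A B) \<in># fst (sq s0 j)" "tsk j = TLCond a x A B"
    using twoL[OF a nrL(2) nrL(5)] by blast
  then show ?thesis using stepP[OF j(3)] by (auto intro: inG[of _ "Suc j"] inD[of _ "Suc j"])
qed

lemma sRBar: "InN c x \<in> G \<Longrightarrow> Sub c a \<in> G \<Longrightarrow> Cnd x a A B \<in> D \<Longrightarrow> ExF c A \<in> D \<or> AllF c (Imp A B) \<in> D"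
proof -
  assume a: "InN c x \<in> G" "Sub c a \<in> G" "Cnd x a A B \<in> D"
  obtain j where j: "InN c x \<in># fst (sq s0 j)" "Sub c a \<in># fst (sq s0 j)" "Cnd x a A B \<in># snd (sq s0 j)" "tsk j = TRBar c x a A B"
    using threeL[OF a nrL(2) nrL(3) nrR(2)] by blast
  then show ?thesis using stepP[OF j(4)] by (auto intro: inD[of _ "Suc j"])
qed

lemma sLBar: "Cnd x a A B \<in> G \<Longrightarrow> \<exists>n. InN (NV n) x \<in> G \<and> Sub (NV n) a \<in> G \<and> ExF (NV n) A \<in> G \<and> AllF (NV n) (Imp A B) \<in> G"
proof -
  assume "Cnd x a A B \<in> G"
  then obtain j where j: "Cnd x a A B \<in># fst (sq s0 j)" "tsk j = TLBar x a A B" using oneL[OF _ rL(5)] by blast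
  let ?n = "freshn (fst (sq s0 j)) (snd (sq s0 j))"
  have "InN (NV ?n) x \<in># fst (sq s0 (Suc j))" "Sub (NV ?n) a \<in># fst (sq s0 (Suc j))"
     "ExF (NV ?n) A \<in># fst (sq s0 (Suc j))" "AllF (NV ?n) (Imp A B) \<in># fst (sq s0 (Suc j))"
    using stepP[OF j(2)] j(1) by simp_all
  then show ?thesis using inG by blast
qed

lemma sRef: "Sub a a \<in> G"
proof -
  obtain j where "tsk j = TRef a" using inf_often by blast
  then show ?thesis using stepP[of j "TRef a"] by (auto intro: inG[of _ "Suc j"])
qed

lemma sTr: "Sub c b \<in> G \<Longrightarrow> Sub b a \<in> G \<Longrightarrow> Sub c a \<in> G"
proof (cases "Sub c b = Sub b a")
  case True
  assume "Sub c b \<in> G" then show ?thesis using True by simp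
next
  case False
  assume a: "Sub c b \<in> G" "Sub b a \<in> G"
  obtain j where j: "Sub c b \<in># fst (sq s0 j)" "Sub b a \<in># fst (sq s0 j)" "tsk j = TTr c b a"
    using twoL[OF a nrL(3) nrL(3)] by blast
  then show ?thesis using stepP[OF j(3)] False by (auto intro: inG[of _ "Suc j"])
qed

lemma sLSub: "InW y a \<in> G \<Longrightarrow> Sub a b \<in> G \<Longrightarrow> InW y b \<in> G"
proof -
  assume a: "InW y a \<in> G" "Sub a b \<in> G"
  obtain j where j: "InW y a \<in># fst (sq s0 j)" "Sub a b \<in># fst (sq s0 j)" "tsk j = TLSub y a b"
    using twoL[OF a nrL(1) nrL(3)] by blast
  then show ?thesis using stepP[OF j(3)] by (auto intro: inG[of _ "Suc j"])
qed

lemma sRuleN: "\<exists>a. InN a x \<in> G"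
proof -
  obtain j where j: "tsk j = TRuleN x" using inf_often by blast
  let ?n = "freshn (fst (sq s0 j)) (snd (sq s0 j))"
  have "InN (NV ?n) x \<in># fst (sq s0 (Suc j))" using stepP[OF j] by simp
  then show ?thesis using inG by blast
qed

lemma sRuleW: "InN a x \<in> G \<Longrightarrow> InW x a \<in> G"
proof -
  assume "InN a x \<in> G"
  then obtain j where j: "InN a x \<in># fst (sq s0 j)" "tsk j = TRuleW a x" using oneL[of "InN a x" "TRuleW a x"] nrL(2) by blast
  then show ?thesis using stepP[OF j(2)] by (auto intro: inG[of _ "Suc j"])
qed

lemma sRuleC: "InN a x \<in> G \<Longrightarrow> InN (Sg x) x \<in> G \<and> Sub (Sg x) a \<in> G"
proof -
  assume "InN a x \<in> G"
  then obtain j where j: "InN a x \<in># fst (sq s0 j)" "tsk j = TRuleC a x" using oneL[of "InN a x" "TRuleC a x"] nrL(2) by blast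
  then show ?thesis using stepP[OF j(2)] by (auto intro: inG[of _ "Suc j"])
qed

lemma sRepP1: "InW y (Sg x) \<in> G \<Longrightarrow> Lab x (Atom p) \<in> G \<Longrightarrow> Lab y (Atom p) \<in> G"
proof -
  assume a: "InW y (Sg x) \<in> G" "Lab x (Atom p) \<in> G"
  obtain j where j: "InW y (Sg x) \<in># fst (sq s0 j)" "Lab x (Atom p) \<in># fst (sq s0 j)" "tsk j = TRepP1 y x p"
    using twoL[OF a nrL(1) nrL(6)] by blast
  then show ?thesis using stepP[OF j(3)] by (auto intro: inG[of _ "Suc j"])
qed

lemma sRepP2: "InW y (Sg x) \<in> G \<Longrightarrow> Lab y (Atom p) \<in> G \<Longrightarrow> Lab x (Atom p) \<in> G"
proof -
  assume a: "InW y (Sg x) \<in> G" "Lab y (Atom p) \<in> G"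
  obtain j where j: "InW y (Sg x) \<in># fst (sq s0 j)" "Lab y (Atom p) \<in># fst (sq s0 j)" "tsk j = TRepP2 y x p"
    using twoL[OF a nrL(1) nrL(6)] by blast
  then show ?thesis using stepP[OF j(3)] by (auto intro: inG[of _ "Suc j"])
qed

lemma sRepN1: "InW y (Sg x) \<in> G \<Longrightarrow> InN a x \<in> G \<Longrightarrow> InN a y \<in> G"
proof -
  assume a: "InW y (Sg x) \<in> G" "InN a x \<in> G"
  obtain j where j: "InW y (Sg x) \<in># fst (sq s0 j)" "InN a x \<in># fst (sq s0 j)" "tsk j = TRepN1 y x a"
    using twoL[OF a nrL(1) nrL(2)] by blast
  then show ?thesis using stepP[OF j(3)] by (auto intro: inG[of _ "Suc j"])
qed

lemma sRepN2: "InW y (Sg x) \<in> G \<Longrightarrow> InN a y \<in> G \<Longrightarrow> InN a x \<in> G"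
proof -
  assume a: "InW y (Sg x) \<in> G" "InN a y \<in> G"
  obtain j where j: "InW y (Sg x) \<in># fst (sq s0 j)" "InN a y \<in># fst (sq s0 j)" "tsk j = TRepN2 y x a"
    using twoL[OF a nrL(1) nrL(2)] by blast
  then show ?thesis using stepP[OF j(3)] by (auto intro: inG[of _ "Suc j"])
qed

end



definition wd :: "nat \<Rightarrow> (nl \<times> bool) option \<Rightarrow> nat" where "wd r t = to_nat (r, t)"

lemma wd_eq[simp]: "wd r t = wd r' t' \<longleftrightarrow> r = r' \<and> t = t'"
  unfolding wd_def by (metis Pair_inject to_nat_def from_nat_to_nat)

lemma wd_fst[simp]: "fst (from_nat (wd r t) :: nat \<times> (nl \<times> bool) option) = r"
  unfolding wd_def by simp

context hk
begin

definition Rl where "Rl u v \<longleftrightarrow> InW u (Sg v) \<in> G"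
definition eqv where "eqv = (\<lambda>u v. Rl u v \<or> Rl v u)\<^sup>*\<^sup>*"
definition rep where "rep z = (LEAST z'. eqv z z')"

lemma eqv_sym: "eqv a b \<Longrightarrow> eqv b a"
  unfolding eqv_def
proof (induction rule: rtranclp_induct)
  case base then show ?case by simp
next
  case (step y z)
  then have "(\<lambda>u v. Rl u v \<or> Rl v u) z y" by blast
  show ?case by (rule converse_rtranclp_into_rtranclp[OF \<open>(\<lambda>u v. Rl u v \<or> Rl v u) z y\<close> step(3)])
qed

lemma eqv_trans: "eqv a b \<Longrightarrow> eqv b c \<Longrightarrow> eqv a c"
  unfolding eqv_def by simp

lemma eqv_refl: "eqv a a" unfolding eqv_def by simp

lemma eqv_rep: "eqv z (rep z)"
  unfolding rep_def by (rule LeastI[of "eqv z" z]) (rule eqv_refl)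

lemma rep_eq: "rep z = rep z' \<longleftrightarrow> eqv z z'"
proof
  assume "rep z = rep z'"
  then show "eqv z z'" using eqv_rep[of z] eqv_rep[of z'] eqv_sym eqv_trans by metis
next
  assume e: "eqv z z'"
  have "eqv z u \<longleftrightarrow> eqv z' u" for u using e eqv_sym eqv_trans by metis
  then have "eqv z = eqv z'" by blast
  then show "rep z = rep z'" unfolding rep_def by simp
qed

lemma Rl_rep: "InW y (Sg x) \<in> G \<Longrightarrow> rep y = rep x"
  unfolding rep_eq eqv_def Rl_def by (simp add: r_into_rtranclp)

lemma transfer:
  assumes "eqv z z'"
  shows "Lab z (Atom p) \<in> G \<Longrightarrow> Lab z' (Atom p) \<in> G" and "InN a z \<in> G \<Longrightarrow> InN a z' \<in> G"
proof -
  have "Lab z (Atom p) \<in> G \<longrightarrow> Lab z' (Atom p) \<in> G"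
    using assms unfolding eqv_def
  proof (induction rule: rtranclp_induct)
    case base then show ?case by simp
  next
    case (step y w)
    then show ?case using sRepP1 sRepP2 unfolding Rl_def by blast
  qed
  moreover have "InN a z \<in> G \<longrightarrow> InN a z' \<in> G"
    using assms unfolding eqv_def
  proof (induction rule: rtranclp_induct)
    case base then show ?case by simp
  next
    case (step y w)
    then show ?case using sRepN1 sRepN2 unfolding Rl_def by blast
  qed
  ultimately show "Lab z (Atom p) \<in> G \<Longrightarrow> Lab z' (Atom p) \<in> G" "InN a z \<in> G \<Longrightarrow> InN a z' \<in> G" by blast+
qed

lemma InN_rep: "rep x = rep x' \<Longrightarrow> InN a x' \<in> G \<Longrightarrow> InN a x \<in> G"
  using transfer(2) rep_eq eqv_sym by metis

definition ext :: "nl \<Rightarrow> nat set" where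
  "ext a = {wd (rep y) None | y. InW y a \<in> G} \<union> {wd (rep x) (Some (d, b)) | x d b. InN d x \<in> G \<and> Sub d a \<in> G}"

definition Nbm :: "nat \<Rightarrow> nat set set" where
  "Nbm w = {{w}} \<union> {ext a \<union> {w} | a x. InN a x \<in> G \<and> fst (from_nat w :: nat \<times> (nl \<times> bool) option) = rep x}"

definition Vm :: "nat \<Rightarrow> nat set" where
  "Vm p = {w. \<exists>z. Lab z (Atom p) \<in> G \<and> fst (from_nat w :: nat \<times> (nl \<times> bool) option) = rep z}"

definition M :: "nat nmodel" where "M = \<lparr>W = UNIV, Nb = Nbm, V = Vm\<rparr>"

lemma M_simps[simp]: "W M = UNIV" "Nb M = Nbm" "V M = Vm" unfolding M_def by simp_all

lemma ext_label: "v \<in> ext a \<Longrightarrow> \<exists>y t. InW y a \<in> G \<and> v = wd (rep y) t"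
  unfolding ext_def using sRuleW sLSub by blast

lemma ext_sub: "Sub c a \<in> G \<Longrightarrow> ext c \<subseteq> ext a"
  unfolding ext_def using sLSub sTr by blast

lemma Nb_w: "\<alpha> \<in> Nbm (wd (rep x) t) \<longleftrightarrow> \<alpha> = {wd (rep x) t} \<or>
   (\<exists>a. InN a x \<in> G \<and> \<alpha> = ext a \<union> {wd (rep x) t})"
  unfolding Nbm_def using InN_rep by auto

lemma Nbm_mem: "\<alpha> \<in> Nbm w \<Longrightarrow> w \<in> \<alpha>" unfolding Nbm_def by auto
lemma Nbm_single: "{w} \<in> Nbm w" unfolding Nbm_def by auto
lemma nmodel_M: "nmodel M" unfolding nmodel_def using Nbm_mem by auto
lemma centering_M: "centering M" unfolding centering_def using Nbm_mem Nbm_single by auto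

end



context hk
begin

lemma truth: "(\<forall>z t. Lab z F \<in> G \<longrightarrow> forces M (wd (rep z) t) F) \<and>
              (\<forall>z t. Lab z F \<in> D \<longrightarrow> \<not> forces M (wd (rep z) t) F)"
proof (induction F)
  case (Atom p)
  have g: "forces M (wd (rep z) t) (Atom p)" if "Lab z (Atom p) \<in> G" for z t
    using that by (auto simp: Vm_def)
  have d: "\<not> forces M (wd (rep z) t) (Atom p)" if "Lab z (Atom p) \<in> D" for z t
  proof
    assume "forces M (wd (rep z) t) (Atom p)"
    then obtain z' where z': "Lab z' (Atom p) \<in> G" "rep z = rep z'" by (auto simp: Vm_def)
    then have "eqv z' z" using rep_eq by metis
    then have "Lab z (Atom p) \<in> G" using transfer(1) z'(1) by blast
    then show False using cons_atom that by blast
  qed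
  show ?case using g d by blast
next
  case Bot
  then show ?case using cons_bot by auto
next
  case (And A B)
  have gA: "\<And>z t. Lab z A \<in> G \<Longrightarrow> forces M (wd (rep z) t) A"
   and dA: "\<And>z t. Lab z A \<in> D \<Longrightarrow> \<not> forces M (wd (rep z) t) A"
   and gB: "\<And>z t. Lab z B \<in> G \<Longrightarrow> forces M (wd (rep z) t) B"
   and dB: "\<And>z t. Lab z B \<in> D \<Longrightarrow> \<not> forces M (wd (rep z) t) B" using And by blast+
  have g: "forces M (wd (rep z) t) (And A B)" if "Lab z (And A B) \<in> G" for z t
    using sLAnd[OF that] gA gB dA dB by simp
  have d: "\<not> forces M (wd (rep z) t) (And A B)" if "Lab z (And A B) \<in> D" for z t
    using sRAnd[OF that] gA gB dA dB by auto
  show ?case using g d by blast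
next
  case (Or A B)
  have gA: "\<And>z t. Lab z A \<in> G \<Longrightarrow> forces M (wd (rep z) t) A"
   and dA: "\<And>z t. Lab z A \<in> D \<Longrightarrow> \<not> forces M (wd (rep z) t) A"
   and gB: "\<And>z t. Lab z B \<in> G \<Longrightarrow> forces M (wd (rep z) t) B"
   and dB: "\<And>z t. Lab z B \<in> D \<Longrightarrow> \<not> forces M (wd (rep z) t) B" using Or by blast+
  have g: "forces M (wd (rep z) t) (Or A B)" if "Lab z (Or A B) \<in> G" for z t
    using sLOr[OF that] gA gB dA dB by auto
  have d: "\<not> forces M (wd (rep z) t) (Or A B)" if "Lab z (Or A B) \<in> D" for z t
    using sROr[OF that] gA gB dA dB by simp
  show ?case using g d by blast
next
  case (Imp A B)
  have gA: "\<And>z t. Lab z A \<in> G \<Longrightarrow> forces M (wd (rep z) t) A"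
   and dA: "\<And>z t. Lab z A \<in> D \<Longrightarrow> \<not> forces M (wd (rep z) t) A"
   and gB: "\<And>z t. Lab z B \<in> G \<Longrightarrow> forces M (wd (rep z) t) B"
   and dB: "\<And>z t. Lab z B \<in> D \<Longrightarrow> \<not> forces M (wd (rep z) t) B" using Imp by blast+
  have g: "forces M (wd (rep z) t) (Imp A B)" if "Lab z (Imp A B) \<in> G" for z t
    using sLImp[OF that] gA gB dA dB by auto
  have d: "\<not> forces M (wd (rep z) t) (Imp A B)" if "Lab z (Imp A B) \<in> D" for z t
    using sRImp[OF that] gA gB dA dB by simp
  show ?case using g d by blast
next
  case (Cond A B)
  have gA: "\<And>z t. Lab z A \<in> G \<Longrightarrow> forces M (wd (rep z) t) A"
   and dA: "\<And>z t. Lab z A \<in> D \<Longrightarrow> \<not> forces M (wd (rep z) t) A"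
   and gB: "\<And>z t. Lab z B \<in> G \<Longrightarrow> forces M (wd (rep z) t) B"
   and dB: "\<And>z t. Lab z B \<in> D \<Longrightarrow> \<not> forces M (wd (rep z) t) B" using Cond by blast+
  have impG: "forces M (wd (rep y) t) A \<Longrightarrow> forces M (wd (rep y) t) B" if "Lab y (Imp A B) \<in> G" for y t
    using sLImp[OF that] gB dA by blast
  have allG: "\<And>v. v \<in> ext a \<Longrightarrow> forces M v A \<Longrightarrow> forces M v B" if "AllF a (Imp A B) \<in> G" for a
  proof -
    fix v assume v: "v \<in> ext a" "forces M v A"
    obtain y t where y: "InW y a \<in> G" "v = wd (rep y) t" using ext_label[OF v(1)] by blast
    show "forces M v B" using impG[OF sLAll[OF y(1) that]] v(2) y(2) by simp
  qed
  have exD: "\<And>v. v \<in> ext a \<Longrightarrow> \<not> forces M v A" if "ExF a A \<in> D" for a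
  proof -
    fix v assume v: "v \<in> ext a"
    obtain y t where y: "InW y a \<in> G" "v = wd (rep y) t" using ext_label[OF v] by blast
    show "\<not> forces M v A" using dA[OF sREx[OF y(1) that]] y(2) by simp
  qed
  have sgl: "InN (Sg z) z \<in> G \<and> InW z (Sg z) \<in> G" for z
  proof -
    obtain a0 where "InN a0 z \<in> G" using sRuleN by blast
    then have "InN (Sg z) z \<in> G" using sRuleC by blast
    then show ?thesis using sRuleW by blast
  qed
  have G: "forces M (wd (rep z) t) (Cond A B)" if zG: "Lab z (Cond A B) \<in> G" for z t
  proof -
    let ?w = "wd (rep z) t"
    have "\<exists>\<beta>\<in>Nbm ?w. \<beta> \<subseteq> \<alpha> \<and> (\<exists>y\<in>\<beta>. forces M y A) \<and> (\<forall>y\<in>\<beta>. forces M y A \<longrightarrow> forces M y B)"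
      if al: "\<alpha> \<in> Nbm ?w" and ex: "\<exists>y\<in>\<alpha>. forces M y A" for \<alpha>
    proof -
      from al have "\<alpha> = {?w} \<or> (\<exists>a. InN a z \<in> G \<and> \<alpha> = ext a \<union> {?w})" using Nb_w by blast
      then show ?thesis
      proof
        assume a1: "\<alpha> = {?w}"
        then have wA: "forces M ?w A" using ex by simp
        have s: "InN (Sg z) z \<in> G" "InW z (Sg z) \<in> G" using sgl by blast+
        from sLCond[OF s(1) zG] show ?thesis
        proof
          assume "ExF (Sg z) A \<in> D"
          then have "Lab z A \<in> D" using sREx s(2) by blast
          then show ?thesis using dA wA by blast
        next
          assume "Cnd z (Sg z) A B \<in> G"
          then obtain n where n: "InN (NV n) z \<in> G" "Sub (NV n) (Sg z) \<in> G" "ExF (NV n) A \<in> G"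
               "AllF (NV n) (Imp A B) \<in> G" using sLBar by blast
          obtain y where y: "InW y (NV n) \<in> G" "Lab y A \<in> G" using sLEx[OF n(3)] by blast
          have "InW y (Sg z) \<in> G" using sLSub[OF y(1) n(2)] .
          then have ry: "rep y = rep z" using Rl_rep by blast
          have "forces M (wd (rep y) t) B" using impG[OF sLAll[OF y(1) n(4)]] gA[OF y(2)] by blast
          then have "forces M ?w B" using ry by simp
          then show ?thesis using a1 wA Nbm_single[of ?w] by auto
        qed
      next
        assume "\<exists>a. InN a z \<in> G \<and> \<alpha> = ext a \<union> {?w}"
        then obtain a where a: "InN a z \<in> G" "\<alpha> = ext a \<union> {?w}" by blast
        from sLCond[OF a(1) zG] show ?thesis
        proof
          assume eD: "ExF a A \<in> D"
          have "\<not> forces M ?w A" using dA[OF sREx[OF sRuleW[OF a(1)] eD]] .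
          then have "\<forall>y\<in>\<alpha>. \<not> forces M y A" using exD[OF eD] a(2) by blast
          then show ?thesis using ex by blast
        next
          assume "Cnd z a A B \<in> G"
          then obtain n where n: "InN (NV n) z \<in> G" "Sub (NV n) a \<in> G" "ExF (NV n) A \<in> G"
               "AllF (NV n) (Imp A B) \<in> G" using sLBar by blast
          let ?\<beta> = "ext (NV n) \<union> {?w}"
          have b1: "?\<beta> \<in> Nbm ?w" using Nb_w n(1) by blast
          have b2: "?\<beta> \<subseteq> \<alpha>" using ext_sub[OF n(2)] a(2) by blast
          obtain y where y: "InW y (NV n) \<in> G" "Lab y A \<in> G" using sLEx[OF n(3)] by blast
          have "wd (rep y) None \<in> ext (NV n)" using y(1) unfolding ext_def by blast
          then have b3: "\<exists>v\<in>?\<beta>. forces M v A" using gA[OF y(2)] by blast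
          have "forces M ?w A \<longrightarrow> forces M ?w B" using impG[OF sLAll[OF sRuleW[OF n(1)] n(4)]] by blast
          then have b4: "\<forall>v\<in>?\<beta>. forces M v A \<longrightarrow> forces M v B" using allG[OF n(4)] by blast
          show ?thesis using b1 b2 b3 b4 by blast
        qed
      qed
    qed
    then show ?thesis by simp
  qed
  have D: "\<not> forces M (wd (rep z) t) (Cond A B)" if zD: "Lab z (Cond A B) \<in> D" for z t
  proof
    let ?w = "wd (rep z) t"
    assume fw: "forces M ?w (Cond A B)"
    obtain n where n: "InN (NV n) z \<in> G" "ExF (NV n) A \<in> G" "Cnd z (NV n) A B \<in> D"
      using sRCond[OF zD] by blast
    let ?\<alpha> = "ext (NV n) \<union> {?w}"
    have a1: "?\<alpha> \<in> Nbm ?w" using Nb_w n(1) by blast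
    obtain y where y: "InW y (NV n) \<in> G" "Lab y A \<in> G" using sLEx[OF n(2)] by blast
    have "wd (rep y) None \<in> ext (NV n)" using y(1) unfolding ext_def by blast
    then have a2: "\<exists>v\<in>?\<alpha>. forces M v A" using gA[OF y(2)] by blast
    obtain \<beta> where b: "\<beta> \<in> Nbm ?w" "\<beta> \<subseteq> ?\<alpha>" "\<exists>v\<in>\<beta>. forces M v A" "\<forall>v\<in>\<beta>. forces M v A \<longrightarrow> forces M v B"
    proof -
      have H: "\<forall>\<alpha>\<in>Nbm ?w. (\<exists>y\<in>\<alpha>. forces M y A) \<longrightarrow> (\<exists>\<beta>\<in>Nbm ?w. \<beta> \<subseteq> \<alpha> \<and>
             (\<exists>y\<in>\<beta>. forces M y A) \<and> (\<forall>y\<in>\<beta>. forces M y A \<longrightarrow> forces M y B))" using fw by simp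
      show ?thesis using H a1 a2 that by blast
    qed
    have "\<beta> = {?w} \<or> (\<exists>c. InN c z \<in> G \<and> \<beta> = ext c \<union> {?w})" using Nb_w b(1) by blast
    then show False
    proof
      assume b1: "\<beta> = {?w}"
      then have wA: "forces M ?w A" and wB: "forces M ?w B" using b(3,4) by auto
      have s: "InN (Sg z) z \<in> G" "Sub (Sg z) (NV n) \<in> G" "InW z (Sg z) \<in> G" using sRuleC[OF n(1)] sgl by blast+
      from sRBar[OF s(1) s(2) n(3)] show False
      proof
        assume "ExF (Sg z) A \<in> D"
        then show False using dA[OF sREx[OF s(3)]] wA by blast
      next
        assume "AllF (Sg z) (Imp A B) \<in> D"
        then obtain u where u: "InW u (Sg z) \<in> G" "Lab u (Imp A B) \<in> D" using sRAll by blast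
        have ru: "rep u = rep z" using Rl_rep[OF u(1)] .
        have "Lab u B \<in> D" using sRImp[OF u(2)] by blast
        then show False using dB[of u t] wB ru by simp
      qed
    next
      assume "\<exists>c. InN c z \<in> G \<and> \<beta> = ext c \<union> {?w}"
      then obtain c where c: "InN c z \<in> G" "\<beta> = ext c \<union> {?w}" by blast
      define bb where "bb = (t \<noteq> Some (c, True))"
      let ?v = "wd (rep z) (Some (c, bb))"
      have "?v \<in> ext c" unfolding ext_def using c(1) sRef[of c] by blast
      then have "?v \<in> ?\<alpha>" using b(2) c(2) by blast
      moreover have "?v \<noteq> ?w" unfolding bb_def by (cases "t = Some (c, True)") auto
      ultimately have "?v \<in> ext (NV n)" by blast
      then have sc: "Sub c (NV n) \<in> G" unfolding ext_def by auto
      from sRBar[OF c(1) sc n(3)] show False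
      proof
        assume eD: "ExF c A \<in> D"
        have "\<not> forces M ?w A" using dA[OF sREx[OF sRuleW[OF c(1)] eD]] .
        then have "\<forall>v\<in>\<beta>. \<not> forces M v A" using exD[OF eD] c(2) by blast
        then show False using b(3) by blast
      next
        assume "AllF c (Imp A B) \<in> D"
        then obtain u where u: "InW u c \<in> G" "Lab u (Imp A B) \<in> D" using sRAll by blast
        have uA: "Lab u A \<in> G" and uB: "Lab u B \<in> D" using sRImp[OF u(2)] by blast+
        have "wd (rep u) None \<in> \<beta>" using u(1) c(2) unfolding ext_def by blast
        then show False using b(4) gA[OF uA] dB[OF uB] by blast
      qed
    qed
  qed
  show ?case using G D by blast
qed

end

theorem mainTheorem19:
  fixes A :: fm and x :: nat
  assumes "\<forall>M :: nat nmodel. nmodel M \<and> centering M \<longrightarrow> valid_in M A"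
  shows "deriv {#} {#Lab x A#}"
proof (rule ccontr)
  assume nd: "\<not> deriv {#} {#Lab x A#}"
  interpret hk "({#}, {#Lab x A#})" by unfold_locales (simp add: dv_def nd)
  have "Lab x A \<in> D" using inD[of "Lab x A" 0] by simp
  then have "\<not> forces M (wd (rep x) None) A" using truth by blast
  moreover have "valid_in M A" using assms nmodel_M centering_M by blast
  ultimately show False unfolding valid_in_def by simp
qed


end
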